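(* Assume $\le_m$ and $\le_s$ are compatible. Then the set $\{LM(sp): sp\in\mathcal{SP}^*\text{ is top-irreducible}\}$ is finite; that is, the top-reduced S-Gröbner basis of $\mathcal{SP}$ is finite up to equivalence (sig-polynomials with the same leading pair being identified).
   Context: Let $k$ be a field, $R=k[x_1,\dots,x_n]$, $\mathcal{M}$ the monoid of monomials, $\mathbf{e}_1,\dots,\mathbf{e}_d$ the standard basis of $R^d$, $\mathcal{M}_d=\{m\mathbf{e}_i\}$, $\lambda\cdot(\mu\mathbf{e}_i)=(\lambda\mu)\mathbf{e}_i$, and $m_1\mathbf{e}_i\mid m_2\mathbf{e}_j$ iff $i=j$ and $m_1\mid m_2$. An admissible monomial order $\le_m$: linear order on $\mathcal{M}$ with $1\le_m m$ and $m_1\le_m m_2\Rightarrow tm_1\le_m tm_2$. An admissible module order $\le_s$: linear order on $\mathcal{M}_d$ with $\mathbf{e}_i\le_s m\mathbf{e}_i$ and $m_1\mathbf{e}_i\le_s m_2\mathbf{e}_i\Rightarrow tm_1\mathbf{e}_i\le_s tm_2\mathbf{e}_i$. Compatible: $\sigma\mathbf{e}_j\le_s\tau\mathbf{e}_j\iff\sigma\le_m\tau$ for all $j,\sigma,\tau$. Fix $f_1,\dots,f_d\in R$. $\mathcal{SP}=\{(\mathbf{u},p)\in R^d\times R:\sum_iu_if_i=p\}$, $\mathcal{SP}^*=\mathcal{SP}\setminus\{(\mathbf{0},0)\}$, $\mathbf{NSP}=\{(\mathbf{u},p)\in\mathcal{SP}:p\ne0\}$. For $(\mathbf{u},p)\in\mathcal{SP}^*$: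 signature $lm(\mathbf{u})$ = $\le_s$-largest element of $\mathcal{M}_d$ in the support of $\mathbf{u}$; $lm(p)$ = $\le_m$-leading monomial ($lm(0)=0$); leading pair $LM(\mathbf{u},p)=(lm(\mathbf{u}),lm(p))$. Relations on leading pairs: $(\mathbf{s}',m')\prec_{m,s}(\mathbf{s},m)$ iff $m',m\ne0$ and $\exists\lambda\in\mathcal{M}$: $\lambda m'=m$, $\lambda\mathbf{s}'<_s\mathbf{s}$. $(\mathbf{s}',m')\prec_{s,m}(\mathbf{s},m)$ iff either ($m',m\ne0$ and $\exists\lambda$: $\lambda\mathbf{s}'=\mathbf{s}$, $\lambda m'<_m m$) or ($m'=0$, $m\ne0$, $\mathbf{s}'\mid\mathbf{s}$). $(\mathbf{s}',m')\mid_{super}(\mathbf{s},m)$ iff either ($m',m\ne0$ and $\exists\lambda$: $\lambda\mathbf{s}'=\mathbf{s}$, $\lambda m'=m$) or ($m'=m=0$ and $\mathbf{s}'\mid\mathbf{s}$). A sig-polynomial $sp\in\mathcal{SP}^*$ is top-irreducible if there is no $sp'\in\mathcal{SP}^*$ with $LM(sp')\prec_{m,s}LM(sp)$ or $LM(sp')\prec_{s,m}LM(sp)$, and no $sp'\in\mathcal{SP}^*$ with $LM(sp')\mid_{super}LM(sp)$ and $LM(sp')\ne LM(sp)$. The top-reduced S-Gröbner basis is the set of top-irreducible sig-polynomials. *)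

theory Defs
  imports Main "HOL-Library.Poly_Mapping"
begin

text \<open>Monomials in the variables x_0,...,x_{n-1} are exponent vectors nat =>0 nat
  whose Poly_Mapping.keys lie in {..<n}; multiplication of monomials is addition of exponents,
  the monomial 1 is 0.  Polynomials over a field 'k are finitely supported maps
  from monomials to 'k (Poly_Mapping provides the ring structure).
  Module monomials m e_i are pairs (m, i) with i < d.
  Module elements u in R^d are functions nat => polynomial, zero outside {..<d}.\<close>

type_synonym monom = "nat \<Rightarrow>\<^sub>0 nat"
type_synonym 'k mpoly = "monom \<Rightarrow>\<^sub>0 'k"
type_synonym mmonom = "monom \<times> nat"

definition monoms :: "nat \<Rightarrow> monom set" where
  "monoms n = {m. Poly_Mapping.keys m \<subseteq> {..<n}}"

definition polys :: "nat \<Rightarrow> ('k::zero) mpoly set" where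
  "polys n = {p. Poly_Mapping.keys p \<subseteq> monoms n}"

definition mmonoms :: "nat \<Rightarrow> nat \<Rightarrow> mmonom set" where
  "mmonoms n d = {(m, i). m \<in> monoms n \<and> i < d}"

definition mmult :: "monom \<Rightarrow> mmonom \<Rightarrow> mmonom" where
  "mmult lam s = (lam + fst s, snd s)"

definition mdvd :: "mmonom \<Rightarrow> mmonom \<Rightarrow> bool" where
  "mdvd s t \<longleftrightarrow> snd s = snd t \<and> (\<exists>lam. fst t = lam + fst s)"

definition linear_order_on_rel :: "'a set \<Rightarrow> ('a \<Rightarrow> 'a \<Rightarrow> bool) \<Rightarrow> bool" where
  "linear_order_on_rel A r \<longleftrightarrow>
     (\<forall>x\<in>A. r x x) \<and>
     (\<forall>x\<in>A. \<forall>y\<in>A. r x y \<and> r y x \<longrightarrow> x = y) \<and>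
     (\<forall>x\<in>A. \<forall>y\<in>A. \<forall>z\<in>A. r x y \<and> r y z \<longrightarrow> r x z) \<and>
     (\<forall>x\<in>A. \<forall>y\<in>A. r x y \<or> r y x)"

definition admissible_monomial_order :: "nat \<Rightarrow> (monom \<Rightarrow> monom \<Rightarrow> bool) \<Rightarrow> bool" where
  "admissible_monomial_order n le_m \<longleftrightarrow>
     linear_order_on_rel (monoms n) le_m \<and>
     (\<forall>m\<in>monoms n. le_m 0 m) \<and>
     (\<forall>t\<in>monoms n. \<forall>m1\<in>monoms n. \<forall>m2\<in>monoms n. le_m m1 m2 \<longrightarrow> le_m (t + m1) (t + m2))"

definition admissible_module_order ::
  "nat \<Rightarrow> nat \<Rightarrow> (mmonom \<Rightarrow> mmonom \<Rightarrow> bool) \<Rightarrow> bool" where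
  "admissible_module_order n d le_s \<longleftrightarrow>
     linear_order_on_rel (mmonoms n d) le_s \<and>
     (\<forall>m\<in>monoms n. \<forall>i<d. le_s (0, i) (m, i)) \<and>
     (\<forall>t\<in>monoms n. \<forall>m1\<in>monoms n. \<forall>m2\<in>monoms n. \<forall>i<d.
        le_s (m1, i) (m2, i) \<longrightarrow> le_s (t + m1, i) (t + m2, i))"

definition compatible_orders ::
  "nat \<Rightarrow> nat \<Rightarrow> (monom \<Rightarrow> monom \<Rightarrow> bool) \<Rightarrow> (mmonom \<Rightarrow> mmonom \<Rightarrow> bool) \<Rightarrow> bool" where
  "compatible_orders n d le_m le_s \<longleftrightarrow>
     (\<forall>j<d. \<forall>\<sigma>\<in>monoms n. \<forall>\<tau>\<in>monoms n. le_s (\<sigma>, j) (\<tau>, j) \<longleftrightarrow> le_m \<sigma> \<tau>)"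

definition SP :: "nat \<Rightarrow> nat \<Rightarrow> (nat \<Rightarrow> ('k::field) mpoly) \<Rightarrow> ((nat \<Rightarrow> 'k mpoly) \<times> 'k mpoly) set" where
  "SP n d f = {(u, p). (\<forall>i<d. u i \<in> polys n) \<and> (\<forall>i\<ge>d. u i = 0) \<and> p \<in> polys n \<and>
                       (\<Sum>i<d. u i * f i) = p}"

definition SPstar :: "nat \<Rightarrow> nat \<Rightarrow> (nat \<Rightarrow> ('k::field) mpoly) \<Rightarrow> ((nat \<Rightarrow> 'k mpoly) \<times> 'k mpoly) set" where
  "SPstar n d f = SP n d f - {(\<lambda>_. 0, 0)}"

definition msupp :: "nat \<Rightarrow> (nat \<Rightarrow> ('k::zero) mpoly) \<Rightarrow> mmonom set" where
  "msupp d u = {(m, i). i < d \<and> m \<in> Poly_Mapping.keys (u i)}"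

definition greatest_wrt :: "('a \<Rightarrow> 'a \<Rightarrow> bool) \<Rightarrow> 'a set \<Rightarrow> 'a" where
  "greatest_wrt r A = (THE x. x \<in> A \<and> (\<forall>y\<in>A. r y x))"

definition sig :: "nat \<Rightarrow> (mmonom \<Rightarrow> mmonom \<Rightarrow> bool) \<Rightarrow> (nat \<Rightarrow> ('k::zero) mpoly) \<Rightarrow> mmonom" where
  "sig d le_s u = greatest_wrt le_s (msupp d u)"

text \<open>Leading monomial of a polynomial; None encodes lm(0) = 0.\<close>
definition lmp :: "(monom \<Rightarrow> monom \<Rightarrow> bool) \<Rightarrow> ('k::zero) mpoly \<Rightarrow> monom option" where
  "lmp le_m p = (if p = 0 then None else Some (greatest_wrt le_m (Poly_Mapping.keys p)))"

definition LM :: "nat \<Rightarrow> (monom \<Rightarrow> monom \<Rightarrow> bool) \<Rightarrow> (mmonom \<Rightarrow> mmonom \<Rightarrow> bool) \<Rightarrow>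
                  (nat \<Rightarrow> ('k::zero) mpoly) \<times> 'k mpoly \<Rightarrow> mmonom \<times> monom option" where
  "LM d le_m le_s sp = (sig d le_s (fst sp), lmp le_m (snd sp))"

definition strict :: "('a \<Rightarrow> 'a \<Rightarrow> bool) \<Rightarrow> 'a \<Rightarrow> 'a \<Rightarrow> bool" where
  "strict r x y \<longleftrightarrow> r x y \<and> x \<noteq> y"

definition prec_ms :: "(mmonom \<Rightarrow> mmonom \<Rightarrow> bool) \<Rightarrow> mmonom \<times> monom option \<Rightarrow> mmonom \<times> monom option \<Rightarrow> bool" where
  "prec_ms le_s a b \<longleftrightarrow>
     (case (a, b) of ((s', Some m'), (s, Some m)) \<Rightarrow>
         (\<exists>lam. lam + m' = m \<and> strict le_s (mmult lam s') s)
      | _ \<Rightarrow> False)"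

definition prec_sm :: "(monom \<Rightarrow> monom \<Rightarrow> bool) \<Rightarrow> mmonom \<times> monom option \<Rightarrow> mmonom \<times> monom option \<Rightarrow> bool" where
  "prec_sm le_m a b \<longleftrightarrow>
     (case (a, b) of ((s', Some m'), (s, Some m)) \<Rightarrow>
         (\<exists>lam. mmult lam s' = s \<and> strict le_m (lam + m') m)
      | ((s', None), (s, Some m)) \<Rightarrow> mdvd s' s
      | _ \<Rightarrow> False)"

definition super_dvd :: "mmonom \<times> monom option \<Rightarrow> mmonom \<times> monom option \<Rightarrow> bool" where
  "super_dvd a b \<longleftrightarrow>
     (case (a, b) of ((s', Some m'), (s, Some m)) \<Rightarrow>
         (\<exists>lam. mmult lam s' = s \<and> lam + m' = m)
      | ((s', None), (s, None)) \<Rightarrow> mdvd s' s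
      | _ \<Rightarrow> False)"

definition top_irreducible ::
  "nat \<Rightarrow> nat \<Rightarrow> (nat \<Rightarrow> ('k::field) mpoly) \<Rightarrow> (monom \<Rightarrow> monom \<Rightarrow> bool) \<Rightarrow> (mmonom \<Rightarrow> mmonom \<Rightarrow> bool) \<Rightarrow>
   (nat \<Rightarrow> 'k mpoly) \<times> 'k mpoly \<Rightarrow> bool" where
  "top_irreducible n d f le_m le_s sp \<longleftrightarrow>
     sp \<in> SPstar n d f \<and>
     \<not> (\<exists>sp'\<in>SPstar n d f.
           prec_ms le_s (LM d le_m le_s sp') (LM d le_m le_s sp) \<or>
           prec_sm le_m (LM d le_m le_s sp') (LM d le_m le_s sp)) \<and>
     \<not> (\<exists>sp'\<in>SPstar n d f.
           super_dvd (LM d le_m le_s sp') (LM d le_m le_s sp) \<and>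
           LM d le_m le_s sp' \<noteq> LM d le_m le_s sp)"

end

theory Submission
  imports Defs Complex_Main
begin

lemma nat_inc_subseq:
  fixes s :: "nat \<Rightarrow> nat"
  shows "\<exists>r::nat\<Rightarrow>nat. strict_mono r \<and> (\<forall>i j. i \<le> j \<longrightarrow> s (r i) \<le> s (r j))"
proof -
  obtain f :: "nat \<Rightarrow> nat" where f: "strict_mono f" "monoseq (\<lambda>n. s (f n))" using seq_monosub by blast
  show ?thesis
  proof (cases "\<forall>m. \<forall>n\<ge>m. s (f m) \<le> s (f n)")
    case True then show ?thesis using f by blast
  next
    case False
    then have dec: "\<forall>m. \<forall>n\<ge>m. s (f n) \<le> s (f m)" using f(2) unfolding monoseq_def by blast
    define v where "v = (LEAST v. \<exists>k. s (f k) = v)"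
    have "\<exists>k. s (f k) = v" unfolding v_def by (rule LeastI_ex) blast
    then obtain N where N: "s (f N) = v" by blast
    have minv: "v \<le> s (f k)" for k unfolding v_def by (rule Least_le) blast
    have const: "s (f (N + i)) = v" for i
    proof -
      have "s (f (N + i)) \<le> s (f N)" using dec by simp
      then show ?thesis using minv[of "N + i"] N by simp
    qed
    have sm: "strict_mono (\<lambda>i. f (N + i))" using f(1) by (simp add: strict_mono_def)
    have "\<forall>i j. i \<le> j \<longrightarrow> s (f (N + i)) \<le> s (f (N + j))" using const by simp
    then show ?thesis using sm by blast
  qed
qed

lemma dickson_subseq:
  fixes s :: "nat \<Rightarrow> 'b \<Rightarrow> nat" and K :: "'b set"
  assumes "finite K"
  shows "\<exists>r::nat\<Rightarrow>nat. strict_mono r \<and> (\<forall>i j. i \<le> j \<longrightarrow> (\<forall>c\<in>K. s (r i) c \<le> s (r j) c))"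
  using assms
proof (induction K rule: finite_induct)
  case empty
  have "strict_mono (\<lambda>i::nat. i)" by (simp add: strict_mono_def)
  then show ?case by blast
next
  case (insert c K)
  then obtain r :: "nat \<Rightarrow> nat" where r: "strict_mono r" "\<forall>i j. i \<le> j \<longrightarrow> (\<forall>c\<in>K. s (r i) c \<le> s (r j) c)" by blast
  obtain r' :: "nat \<Rightarrow> nat" where r': "strict_mono r'" "\<forall>i j. i \<le> j \<longrightarrow> s (r (r' i)) c \<le> s (r (r' j)) c"
    using nat_inc_subseq[of "\<lambda>i. s (r i) c"] by blast
  have sm: "strict_mono (\<lambda>i. r (r' i))" using r(1) r'(1) by (simp add: strict_mono_def)
  have "\<forall>i j. i \<le> j \<longrightarrow> (\<forall>c'\<in>insert c K. s (r (r' i)) c' \<le> s (r (r' j)) c')"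
  proof (intro allI impI ballI)
    fix i j :: nat and c' assume ij: "i \<le> j" and c': "c' \<in> insert c K"
    have "r' i \<le> r' j" using ij r'(1) by (simp add: strict_mono_less_eq)
    show "s (r (r' i)) c' \<le> s (r (r' j)) c'"
    proof (cases "c' = c")
      case True
      then show ?thesis using r'(2) ij by simp
    next
      case False
      then have "c' \<in> K" using c' by simp
      then show ?thesis using r(2) \<open>r' i \<le> r' j\<close> by simp
    qed
  qed
  then show ?case using sm by blast
qed

lemma antichain_finite:
  fixes g :: "'a \<Rightarrow> 'b \<Rightarrow> nat" and K :: "'b set"
  assumes "finite K" "\<forall>x\<in>S. \<forall>y\<in>S. (\<forall>c\<in>K. g x c \<le> g y c) \<longrightarrow> x = y"
  shows "finite S"
proof (rule ccontr)
  assume "infinite S"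
  from infinite_countable_subset[OF this] obtain f :: "nat \<Rightarrow> 'a" where f: "inj f" "range f \<subseteq> S" by (elim exE conjE)
  from dickson_subseq[OF assms(1), of "\<lambda>i. g (f i)"]
  obtain r :: "nat \<Rightarrow> nat" where r: "strict_mono r" "\<forall>i j. i \<le> j \<longrightarrow> (\<forall>c\<in>K. g (f (r i)) c \<le> g (f (r j)) c)"
    by (elim exE conjE)
  have le01: "\<forall>c\<in>K. g (f (r 0)) c \<le> g (f (r 1)) c" using r(2) by simp
  have m0: "f (r 0) \<in> S" and m1: "f (r 1) \<in> S" using f(2) by (simp_all add: image_subset_iff)
  have "f (r 0) = f (r 1)" using mp[OF bspec[OF bspec[OF assms(2) m0] m1] le01] .
  then have "r 0 = r 1" using inj_eq[OF f(1)] by blast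
  moreover have "r 0 < r 1" using strict_monoD[OF r(1), of 0 1] by simp
  ultimately show False by simp
qed

lemma greatest_wrt_prop:
  assumes lin: "linear_order_on_rel D r" and fin: "finite A" and ne: "A \<noteq> {}" and sub: "A \<subseteq> D"
  shows "greatest_wrt r A \<in> A \<and> (\<forall>y\<in>A. r y (greatest_wrt r A))"
proof -
  have refl: "\<And>x. x \<in> D \<Longrightarrow> r x x" and antis: "\<And>x y. x \<in> D \<Longrightarrow> y \<in> D \<Longrightarrow> r x y \<Longrightarrow> r y x \<Longrightarrow> x = y"
    and trans: "\<And>x y z. x \<in> D \<Longrightarrow> y \<in> D \<Longrightarrow> z \<in> D \<Longrightarrow> r x y \<Longrightarrow> r y z \<Longrightarrow> r x z"
    and tot: "\<And>x y. x \<in> D \<Longrightarrow> y \<in> D \<Longrightarrow> r x y \<or> r y x"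
    using lin unfolding linear_order_on_rel_def by blast+
  have ex: "\<exists>x\<in>A. \<forall>y\<in>A. r y x" using fin ne sub
  proof (induction A rule: finite_ne_induct)
    case (singleton x)
    then have "x \<in> D" by simp
    then have "r x x" by (rule refl)
    then show ?case by simp
  next
    case (insert x F)
    have xD: "x \<in> D" and FD: "F \<subseteq> D" using insert.prems by auto
    obtain g where g: "g \<in> F" "\<forall>y\<in>F. r y g" using insert.IH FD by blast
    have gD: "g \<in> D" using g(1) FD by blast
    show ?case
    proof (cases "r g x")
      case True
      have "\<forall>y\<in>insert x F. r y x"
      proof
        fix y assume y: "y \<in> insert x F"
        show "r y x"
        proof (cases "y = x")
          case True then show ?thesis using refl[OF xD] by simp
        next
          case False
          then have yF: "y \<in> F" using y by simp
          then have yD: "y \<in> D" using FD by blast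
          have "r y g" using g(2) yF by blast
          then show ?thesis using trans[OF yD gD xD] \<open>r g x\<close> by blast
        qed
      qed
      then show ?thesis by blast
    next
      case False
      then have rxg: "r x g" using tot[OF gD xD] by blast
      have "\<forall>y\<in>insert x F. r y g" using rxg g(2) by blast
      then show ?thesis using g(1) by blast
    qed
  qed
  then obtain x where x: "x \<in> A" "\<forall>y\<in>A. r y x" by blast
  have "\<exists>!x. x \<in> A \<and> (\<forall>y\<in>A. r y x)"
  proof (rule ex1I[of _ x])
    show "x \<in> A \<and> (\<forall>y\<in>A. r y x)" using x by blast
  next
    fix z assume z: "z \<in> A \<and> (\<forall>y\<in>A. r y z)"
    have "r z x" using x z by blast
    moreover have "r x z" using x z by blast
    moreover have "z \<in> D" "x \<in> D" using z x sub by blast+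
    ultimately show "z = x" using antis by blast
  qed
  then show ?thesis unfolding greatest_wrt_def by (rule theI')
qed

lemma monoms_lookup:
  assumes "m \<in> monoms n" "c \<ge> n" shows "Poly_Mapping.lookup m c = 0"
proof -
  have "c \<notin> Poly_Mapping.keys m" using assms unfolding monoms_def by auto
  then show ?thesis by (simp add: in_keys_iff)
qed

lemma monoms_add:
  assumes "a \<in> monoms n" "b \<in> monoms n" shows "a + b \<in> monoms n"
proof -
  have "Poly_Mapping.keys a \<union> Poly_Mapping.keys b \<subseteq> {..<n}" using assms unfolding monoms_def by simp
  then have "Poly_Mapping.keys (a + b) \<subseteq> {..<n}" using keys_add[of a b] by (rule order_trans[rotated])
  then show ?thesis unfolding monoms_def by simp
qed

lemma monom_diff:
  assumes "\<forall>c. Poly_Mapping.lookup a c \<le> Poly_Mapping.lookup (b::monom) c" "b \<in> monoms n"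
  shows "(b - a) + a = b" "b - a \<in> monoms n"
proof -
  show "(b - a) + a = b" using assms(1) by (intro poly_mapping_eqI) (simp add: lookup_add lookup_minus)
  have "Poly_Mapping.keys (b - a) \<subseteq> Poly_Mapping.keys b"
  proof
    fix c :: nat assume "c \<in> Poly_Mapping.keys (b - a)"
    then have "Poly_Mapping.lookup b c \<noteq> 0" by (simp add: in_keys_iff lookup_minus)
    then show "c \<in> Poly_Mapping.keys b" by (simp add: in_keys_iff)
  qed
  then show "b - a \<in> monoms n" using assms(2) unfolding monoms_def by auto
qed

lemma sig_mem:
  assumes adm: "admissible_module_order n d le_s" and sp: "(u, p) \<in> SPstar n d f"
  shows "sig d le_s u \<in> mmonoms n d"
proof -
  have spd: "\<forall>i<d. u i \<in> polys n" "\<forall>i\<ge>d. u i = 0" "(\<Sum>i<d. u i * f i) = p" "(u, p) \<noteq> (\<lambda>_. 0, 0)"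
    using sp unfolding SPstar_def SP_def by auto
  have sub: "msupp d u \<subseteq> mmonoms n d" using spd(1) unfolding msupp_def mmonoms_def polys_def by auto
  have "msupp d u \<subseteq> (\<Union>i<d. Poly_Mapping.keys (u i) \<times> {i})" unfolding msupp_def by auto
  then have fin: "finite (msupp d u)" by (rule finite_subset) auto
  have "u \<noteq> (\<lambda>_. 0)" using spd(3,4) by auto
  then obtain i where i: "u i \<noteq> 0" by auto
  then have "i < d" using spd(2) by (meson not_le)
  moreover obtain m where "m \<in> Poly_Mapping.keys (u i)" using i by (metis all_not_in_conv keys_eq_empty)
  ultimately have ne: "msupp d u \<noteq> {}" unfolding msupp_def by auto
  have lin: "linear_order_on_rel (mmonoms n d) le_s" using adm unfolding admissible_module_order_def by blast
  show ?thesis using greatest_wrt_prop[OF lin fin ne sub] sub unfolding sig_def by blast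
qed

lemma lmp_mem:
  assumes adm: "admissible_monomial_order n le_m" and p: "p \<in> polys n" and l: "lmp le_m p = Some m"
  shows "m \<in> monoms n"
proof -
  have pz: "p \<noteq> 0" and m: "m = greatest_wrt le_m (Poly_Mapping.keys p)" using l unfolding lmp_def by (auto split: if_splits)
  have ne: "Poly_Mapping.keys p \<noteq> {}" using pz by simp
  have sub: "Poly_Mapping.keys p \<subseteq> monoms n" using p unfolding polys_def by auto
  have lin: "linear_order_on_rel (monoms n) le_m" using adm unfolding admissible_monomial_order_def by blast
  show ?thesis using greatest_wrt_prop[OF lin finite_keys ne sub] sub m by blast
qed

lemma key:
  assumes mo: "admissible_monomial_order n le_m" and co: "compatible_orders n d le_m le_s"
    and i: "i < d" and ms: "\<sigma> \<in> monoms n" "\<sigma>' \<in> monoms n" "m \<in> monoms n" "m' \<in> monoms n"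
    and le1: "\<forall>c. Poly_Mapping.lookup \<sigma>' c \<le> Poly_Mapping.lookup \<sigma> c" and le2: "\<forall>c. Poly_Mapping.lookup m' c \<le> Poly_Mapping.lookup m c"
    and n1: "\<not> prec_ms le_s ((\<sigma>',i),Some m') ((\<sigma>,i),Some m)"
    and n2: "\<not> prec_sm le_m ((\<sigma>',i),Some m') ((\<sigma>,i),Some m)"
    and n3: "\<not> (super_dvd ((\<sigma>',i),Some m') ((\<sigma>,i),Some m) \<and> ((\<sigma>',i),Some m') \<noteq> ((\<sigma>,i),Some m))"
  shows "((\<sigma>',i),Some m') = ((\<sigma>,i),Some m)"
proof -
  define l1 where "l1 = \<sigma> - \<sigma>'"
  define l2 where "l2 = m - m'"
  have h1: "l1 + \<sigma>' = \<sigma>" "l1 \<in> monoms n" using monom_diff[OF le1 ms(1)] l1_def by auto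
  have h2: "l2 + m' = m" "l2 \<in> monoms n" using monom_diff[OF le2 ms(3)] l2_def by auto
  have refl: "\<And>x. x \<in> monoms n \<Longrightarrow> le_m x x"
    and tot: "\<And>x y. x \<in> monoms n \<Longrightarrow> y \<in> monoms n \<Longrightarrow> le_m x y \<or> le_m y x"
    and mult: "\<And>t a b. t \<in> monoms n \<Longrightarrow> a \<in> monoms n \<Longrightarrow> b \<in> monoms n \<Longrightarrow> le_m a b \<Longrightarrow> le_m (t + a) (t + b)"
    using mo unfolding admissible_monomial_order_def linear_order_on_rel_def by blast+
  have l1m: "l1 + m' \<in> monoms n" using monoms_add h1(2) ms(4) by blast
  show ?thesis
  proof (cases "l1 + m' = m")
    case True
    have "super_dvd ((\<sigma>',i),Some m') ((\<sigma>,i),Some m)"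
      unfolding super_dvd_def mmult_def using True h1 by auto
    then show ?thesis using n3 by blast
  next
    case False
    show ?thesis
    proof (cases "le_m (l1 + m') m")
      case True
      have "prec_sm le_m ((\<sigma>',i),Some m') ((\<sigma>,i),Some m)"
        unfolding prec_sm_def mmult_def strict_def using True False h1 by auto
      then show ?thesis using n2 by blast
    next
      case nle: False
      have "\<not> le_m l1 l2"
      proof
        assume "le_m l1 l2"
        then have "le_m (m' + l1) (m' + l2)" using mult ms(4) h1(2) h2(2) by blast
        then show False using nle h2(1) by (simp add: add.commute)
      qed
      then have le21: "le_m l2 l1" and ne: "l2 \<noteq> l1" using tot[OF h1(2) h2(2)] refl h1(2) by auto
      have "le_m (\<sigma>' + l2) (\<sigma>' + l1)" using mult[OF ms(2) h2(2) h1(2) le21] .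
      then have "le_s (l2 + \<sigma>', i) (l1 + \<sigma>', i)"
        using co i monoms_add[OF h2(2) ms(2)] monoms_add[OF h1(2) ms(2)]
        unfolding compatible_orders_def by (simp add: add.commute)
      moreover have "l2 + \<sigma>' \<noteq> l1 + \<sigma>'" using ne by simp
      ultimately have "prec_ms le_s ((\<sigma>',i),Some m') ((\<sigma>,i),Some m)"
        unfolding prec_ms_def mmult_def strict_def using h1 h2 by auto
      then show ?thesis using n1 by blast
    qed
  qed
qed


lemma top_irr_D:
  assumes "top_irreducible n d f le_m le_s sp" "sp' \<in> SPstar n d f"
  shows "\<not> prec_ms le_s (LM d le_m le_s sp') (LM d le_m le_s sp)"
    "\<not> prec_sm le_m (LM d le_m le_s sp') (LM d le_m le_s sp)"
    "\<not> (super_dvd (LM d le_m le_s sp') (LM d le_m le_s sp) \<and> LM d le_m le_s sp' \<noteq> LM d le_m le_s sp)"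
  using assms unfolding top_irreducible_def by blast+

theorem mainTheorem6:
  fixes n d :: nat
    and f :: "nat \<Rightarrow> ('k::field) mpoly"
    and le_m :: "monom \<Rightarrow> monom \<Rightarrow> bool"
    and le_s :: "mmonom \<Rightarrow> mmonom \<Rightarrow> bool"
  assumes "\<forall>i<d. f i \<in> polys n"
    and "admissible_monomial_order n le_m"
    and "admissible_module_order n d le_s"
    and "compatible_orders n d le_m le_s"
  shows "finite {LM d le_m le_s sp | sp. top_irreducible n d f le_m le_s sp}"
proof -
  note mo = assms(2) and so = assms(3) and co = assms(4)
  define T where "T = {LM d le_m le_s sp | sp. top_irreducible n d f le_m le_s sp}"
  define CN where "CN i = {x\<in>T. snd (fst x) = i \<and> snd x = None}" for i
  define CS where "CS i = {x\<in>T. snd (fst x) = i \<and> snd x \<noteq> None}" for i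
  have info: "\<exists>sp. top_irreducible n d f le_m le_s sp \<and> x = LM d le_m le_s sp \<and> sp \<in> SPstar n d f \<and>
     fst (fst x) \<in> monoms n \<and> snd (fst x) < d \<and> (\<forall>m. snd x = Some m \<longrightarrow> m \<in> monoms n)" if "x \<in> T" for x
  proof -
    obtain sp where sp: "top_irreducible n d f le_m le_s sp" "x = LM d le_m le_s sp" using \<open>x \<in> T\<close> T_def by blast
    have sps: "sp \<in> SPstar n d f" using sp(1) unfolding top_irreducible_def by blast
    obtain u p where up: "sp = (u, p)" by fastforce
    have "sig d le_s u \<in> mmonoms n d" using sig_mem[OF so] sps up by blast
    then have a: "fst (fst x) \<in> monoms n \<and> snd (fst x) < d" using sp(2) up unfolding LM_def mmonoms_def by auto
    have "p \<in> polys n" using sps up unfolding SPstar_def SP_def by auto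
    then have b: "\<forall>m. snd x = Some m \<longrightarrow> m \<in> monoms n" using sp(2) up lmp_mem[OF mo] unfolding LM_def by auto
    show ?thesis using sp sps a b by blast
  qed
  have cover: "T \<subseteq> (\<Union>i<d. CN i \<union> CS i)"
  proof
    fix x assume "x \<in> T"
    then show "x \<in> (\<Union>i<d. CN i \<union> CS i)" using info[of x] unfolding CN_def CS_def by auto
  qed
  have finN: "finite (CN i)" for i
  proof (rule antichain_finite[where K = "{..<n}" and g = "\<lambda>x c. Poly_Mapping.lookup (fst (fst x)) c"])
    show "finite {..<n}" by simp
    show "\<forall>x\<in>CN i. \<forall>y\<in>CN i. (\<forall>c\<in>{..<n}. Poly_Mapping.lookup (fst (fst x)) c \<le> Poly_Mapping.lookup (fst (fst y)) c) \<longrightarrow> x = y"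
    proof (intro ballI impI)
      fix x y assume x: "x \<in> CN i" and y: "y \<in> CN i" and le: "\<forall>c\<in>{..<n}. Poly_Mapping.lookup (fst (fst x)) c \<le> Poly_Mapping.lookup (fst (fst y)) c"
      have xT: "x \<in> T" and yT: "y \<in> T" using x y unfolding CN_def by simp_all
      have xi: "snd (fst x) = i" "snd x = None" and yi: "snd (fst y) = i" "snd y = None"
        using x y unfolding CN_def by simp_all
      define sx where "sx = fst (fst x)"
      define sy where "sy = fst (fst y)"
      have xs: "x = ((sx, i), None)" using xi unfolding sx_def by (simp add: prod_eq_iff)
      have ys: "y = ((sy, i), None)" using yi unfolding sy_def by (simp add: prod_eq_iff)
      obtain sp' where sp': "top_irreducible n d f le_m le_s sp'" "x = LM d le_m le_s sp'" "sp' \<in> SPstar n d f"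
          "fst (fst x) \<in> monoms n" "snd (fst x) < d" "\<forall>m. snd x = Some m \<longrightarrow> m \<in> monoms n"
        using info[OF xT] by (elim exE conjE) (rule that, assumption+)
      obtain sp where sp: "top_irreducible n d f le_m le_s sp" "y = LM d le_m le_s sp" "sp \<in> SPstar n d f"
          "fst (fst y) \<in> monoms n" "snd (fst y) < d" "\<forall>m. snd y = Some m \<longrightarrow> m \<in> monoms n"
        using info[OF yT] by (elim exE conjE) (rule that, assumption+)
      have msx: "sx \<in> monoms n" and msy: "sy \<in> monoms n" using sp'(4) sp(4) xs ys by simp_all
      have le': "\<forall>c\<in>{..<n}. Poly_Mapping.lookup sx c \<le> Poly_Mapping.lookup sy c" using le xs ys by simp
      have lec: "\<forall>c. Poly_Mapping.lookup sx c \<le> Poly_Mapping.lookup sy c"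
      proof
        fix c show "Poly_Mapping.lookup sx c \<le> Poly_Mapping.lookup sy c"
        proof (cases "c < n")
          case True then show ?thesis using le' by simp
        next
          case False then show ?thesis using monoms_lookup[OF msx, of c] by simp
        qed
      qed
      have dv: "(sy - sx) + sx = sy" using monom_diff(1)[OF lec msy] .
      have "\<exists>lam. sy = lam + sx" using dv[symmetric] by blast
      then have sd: "super_dvd x y" unfolding xs ys super_dvd_def mdvd_def by simp
      have "\<not> (super_dvd x y \<and> x \<noteq> y)" using top_irr_D(3)[OF sp(1) sp'(3)] sp'(2) sp(2) by simp
      then show "x = y" using sd by blast
    qed
  qed
  have finS: "finite (CS i)" for i
  proof (rule antichain_finite[where K = "{..<n} \<times> {0::nat,1}" and
        g = "\<lambda>x (c,b). if b = 0 then Poly_Mapping.lookup (fst (fst x)) c else Poly_Mapping.lookup (the (snd x)) c"])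
    show "finite ({..<n} \<times> {0::nat,1})" by simp
    show "\<forall>x\<in>CS i. \<forall>y\<in>CS i. (\<forall>cb\<in>{..<n} \<times> {0::nat,1}. (\<lambda>x (c,b). if b = 0 then Poly_Mapping.lookup (fst (fst x)) c else Poly_Mapping.lookup (the (snd x)) c) x cb
          \<le> (\<lambda>x (c,b). if b = 0 then Poly_Mapping.lookup (fst (fst x)) c else Poly_Mapping.lookup (the (snd x)) c) y cb) \<longrightarrow> x = y"
    proof (intro ballI impI)
      fix x y assume x: "x \<in> CS i" and y: "y \<in> CS i"
        and le: "\<forall>cb\<in>{..<n} \<times> {0::nat,1}. (\<lambda>x (c,b). if b = 0 then Poly_Mapping.lookup (fst (fst x)) c else Poly_Mapping.lookup (the (snd x)) c) x cb
          \<le> (\<lambda>x (c,b). if b = 0 then Poly_Mapping.lookup (fst (fst x)) c else Poly_Mapping.lookup (the (snd x)) c) y cb"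
      have xT: "x \<in> T" and yT: "y \<in> T" using x y unfolding CS_def by simp_all
      have xi: "snd (fst x) = i" "snd x \<noteq> None" and yi: "snd (fst y) = i" "snd y \<noteq> None"
        using x y unfolding CS_def by simp_all
      define sx where "sx = fst (fst x)"
      define sy where "sy = fst (fst y)"
      define m' where "m' = the (snd x)"
      define m where "m = the (snd y)"
      have xs: "x = ((sx, i), Some m')" using xi unfolding sx_def m'_def by (simp add: prod_eq_iff)
      have ys: "y = ((sy, i), Some m)" using yi unfolding sy_def m_def by (simp add: prod_eq_iff)
      obtain sp' where sp': "top_irreducible n d f le_m le_s sp'" "x = LM d le_m le_s sp'" "sp' \<in> SPstar n d f"
          "fst (fst x) \<in> monoms n" "snd (fst x) < d" "\<forall>m. snd x = Some m \<longrightarrow> m \<in> monoms n"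
        using info[OF xT] by (elim exE conjE) (rule that, assumption+)
      obtain sp where sp: "top_irreducible n d f le_m le_s sp" "y = LM d le_m le_s sp" "sp \<in> SPstar n d f"
          "fst (fst y) \<in> monoms n" "snd (fst y) < d" "\<forall>m. snd y = Some m \<longrightarrow> m \<in> monoms n"
        using info[OF yT] by (elim exE conjE) (rule that, assumption+)
      have msx: "sx \<in> monoms n" and msy: "sy \<in> monoms n" and mm': "m' \<in> monoms n" and mm: "m \<in> monoms n"
        and i: "i < d"
        using sp'(4,5,6) sp(4,6) xs ys by simp_all
      have le': "\<forall>c<n. Poly_Mapping.lookup sx c \<le> Poly_Mapping.lookup sy c \<and> Poly_Mapping.lookup m' c \<le> Poly_Mapping.lookup m c"
      proof (intro allI impI)
        fix c assume "c < n"
        then show "Poly_Mapping.lookup sx c \<le> Poly_Mapping.lookup sy c \<and> Poly_Mapping.lookup m' c \<le> Poly_Mapping.lookup m c"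
          using le[rule_format, of "(c,0)"] le[rule_format, of "(c,1)"] xs ys by simp
      qed
      have le1: "\<forall>c. Poly_Mapping.lookup sx c \<le> Poly_Mapping.lookup sy c"
      proof
        fix c show "Poly_Mapping.lookup sx c \<le> Poly_Mapping.lookup sy c"
          using le' monoms_lookup[OF msx, of c] by (cases "c < n") auto
      qed
      have le2: "\<forall>c. Poly_Mapping.lookup m' c \<le> Poly_Mapping.lookup m c"
      proof
        fix c show "Poly_Mapping.lookup m' c \<le> Poly_Mapping.lookup m c"
          using le' monoms_lookup[OF mm', of c] by (cases "c < n") auto
      qed
      have nr: "\<not> prec_ms le_s x y" "\<not> prec_sm le_m x y" "\<not> (super_dvd x y \<and> x \<noteq> y)"
        using top_irr_D[OF sp(1) sp'(3)] sp'(2) sp(2) by simp_all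
      have "((sx, i), Some m') = ((sy, i), Some m)"
        using key[OF mo co i msy msx mm mm' le1 le2] nr unfolding xs ys by blast
      then show "x = y" unfolding xs ys .
    qed
  qed
  have "finite (\<Union>i<d. CN i \<union> CS i)" using finN finS by blast
  then show ?thesis using cover T_def finite_subset by blast
qed

end
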